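(* Let $L\ge2$, fix an input $x\in\mathbb R^{d_0}$, and consider the $L$-layer ReLU network with parameters $\bm\theta=(W_1,b_1,\dots,W_L,b_L)$, where $W_l\in\mathbb R^{d_l\times d_{l-1}}$, $b_l\in\mathbb R^{d_l}$ for $l<L$, and $W_L\in\mathbb R^{C\times d_{L-1}}$, $b_L\in\mathbb R^C$; define $a_0(x)=x$, $a_l(x)=\sigma(W_la_{l-1}(x)+b_l)$ for $l=1,\dots,L-1$, and $F_x(\bm\theta)=W_La_{L-1}(x)+b_L$. Define $Z_1^+=\sigma(W_1x+b_1)$, $Z_1^-=0$ and, for $l=1,\dots,L-2$, $p_{l+1}=\sigma(W_{l+1})Z_l^++\sigma(-W_{l+1})Z_l^-+b_{l+1}$, $Z_{l+1}^-=\sigma(W_{l+1})Z_l^-+\sigma(-W_{l+1})Z_l^+$, $Z_{l+1}^+=\max\{p_{l+1},Z_{l+1}^-\}$, and set $A(\bm\theta)=\sigma(W_L)Z_{L-1}^++\sigma(-W_L)Z_{L-1}^-+\sigma(b_L)$, $B(\bm\theta)=\sigma(W_L)Z_{L-1}^-+\sigma(-W_L)Z_{L-1}^++\sigma(-b_L)$. Then $F_x(\bm\theta)=A(\bm\theta)-B(\bm\theta)$ for all $\bm\theta$, and for every block $\theta_l=(W_l,b_l)$, $l\in\{1,\dots,L\}$, when all other blocks are held fixed, each coordinate of $A$ and of $B$ is nonnegative and convex as a function of $\theta_l$.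
   Context: $\sigma(t)=\max\{t,0\}$ is the ReLU, applied entrywise to vectors and matrices; $\max\{\cdot,\cdot\}$ of two vectors is taken coordinatewise. *)

theory Defs
  imports "HOL-Analysis.Analysis"
begin

text \<open>Vectors in R^n are functions nat => real (only indices < n matter),
matrices are functions nat => nat => real (row, column).
Network parameters: W l, b l for layer l = 1..L; widths d 0, ..., d L with d L = C.\<close>

definition relu :: "real \<Rightarrow> real" where
  "relu t = max t 0"

definition mv :: "nat \<Rightarrow> (nat \<Rightarrow> nat \<Rightarrow> real) \<Rightarrow> (nat \<Rightarrow> real) \<Rightarrow> nat \<Rightarrow> real" where
  "mv n M v = (\<lambda>i. \<Sum>j<n. M i j * v j)"

definition relu_mat :: "(nat \<Rightarrow> nat \<Rightarrow> real) \<Rightarrow> nat \<Rightarrow> nat \<Rightarrow> real" where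
  "relu_mat M = (\<lambda>i j. relu (M i j))"

definition neg_mat :: "(nat \<Rightarrow> nat \<Rightarrow> real) \<Rightarrow> nat \<Rightarrow> nat \<Rightarrow> real" where
  "neg_mat M = (\<lambda>i j. - M i j)"

primrec act :: "(nat \<Rightarrow> nat) \<Rightarrow> (nat \<Rightarrow> nat \<Rightarrow> nat \<Rightarrow> real) \<Rightarrow> (nat \<Rightarrow> nat \<Rightarrow> real)
    \<Rightarrow> (nat \<Rightarrow> real) \<Rightarrow> nat \<Rightarrow> nat \<Rightarrow> real" where
  "act d W b x 0 = x"
| "act d W b x (Suc l) = (\<lambda>i. relu (mv (d l) (W (Suc l)) (act d W b x l) i + b (Suc l) i))"

definition net :: "nat \<Rightarrow> (nat \<Rightarrow> nat) \<Rightarrow> (nat \<Rightarrow> nat \<Rightarrow> nat \<Rightarrow> real) \<Rightarrow> (nat \<Rightarrow> nat \<Rightarrow> real)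
    \<Rightarrow> (nat \<Rightarrow> real) \<Rightarrow> nat \<Rightarrow> real" where
  "net L d W b x = (\<lambda>i. mv (d (L - 1)) (W L) (act d W b x (L - 1)) i + b L i)"

text \<open>Z l = (Z_l^+, Z_l^-) for l \<ge> 1 (the value at 0 is irrelevant).\<close>
fun Zpm :: "(nat \<Rightarrow> nat) \<Rightarrow> (nat \<Rightarrow> nat \<Rightarrow> nat \<Rightarrow> real) \<Rightarrow> (nat \<Rightarrow> nat \<Rightarrow> real)
    \<Rightarrow> (nat \<Rightarrow> real) \<Rightarrow> nat \<Rightarrow> (nat \<Rightarrow> real) \<times> (nat \<Rightarrow> real)" where
  "Zpm d W b x 0 = (x, (\<lambda>_. 0))"
| "Zpm d W b x (Suc 0) = ((\<lambda>i. relu (mv (d 0) (W 1) x i + b 1 i)), (\<lambda>_. 0))"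
| "Zpm d W b x (Suc (Suc l)) =
     (let (Zp, Zm) = Zpm d W b x (Suc l);
          n = d (Suc l);
          p = (\<lambda>i. mv n (relu_mat (W (Suc (Suc l)))) Zp i
                   + mv n (relu_mat (neg_mat (W (Suc (Suc l))))) Zm i + b (Suc (Suc l)) i);
          Zm' = (\<lambda>i. mv n (relu_mat (W (Suc (Suc l)))) Zm i
                   + mv n (relu_mat (neg_mat (W (Suc (Suc l))))) Zp i)
      in ((\<lambda>i. max (p i) (Zm' i)), Zm'))"

definition Aterm :: "nat \<Rightarrow> (nat \<Rightarrow> nat) \<Rightarrow> (nat \<Rightarrow> nat \<Rightarrow> nat \<Rightarrow> real) \<Rightarrow> (nat \<Rightarrow> nat \<Rightarrow> real)
    \<Rightarrow> (nat \<Rightarrow> real) \<Rightarrow> nat \<Rightarrow> real" where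
  "Aterm L d W b x = (let (Zp, Zm) = Zpm d W b x (L - 1); n = d (L - 1) in
     (\<lambda>i. mv n (relu_mat (W L)) Zp i + mv n (relu_mat (neg_mat (W L))) Zm i + relu (b L i)))"

definition Bterm :: "nat \<Rightarrow> (nat \<Rightarrow> nat) \<Rightarrow> (nat \<Rightarrow> nat \<Rightarrow> nat \<Rightarrow> real) \<Rightarrow> (nat \<Rightarrow> nat \<Rightarrow> real)
    \<Rightarrow> (nat \<Rightarrow> real) \<Rightarrow> nat \<Rightarrow> real" where
  "Bterm L d W b x = (let (Zp, Zm) = Zpm d W b x (L - 1); n = d (L - 1) in
     (\<lambda>i. mv n (relu_mat (W L)) Zm i + mv n (relu_mat (neg_mat (W L))) Zp i + relu (- b L i)))"

text \<open>Convexity of a real function of one parameter block theta_l = (W_l, b_l),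
 where convex combinations are taken entrywise (literal unfolding of convex_on on
 the parameter space).\<close>
definition block_convex :: "((nat \<Rightarrow> nat \<Rightarrow> real) \<Rightarrow> (nat \<Rightarrow> real) \<Rightarrow> real) \<Rightarrow> bool" where
  "block_convex f \<longleftrightarrow> (\<forall>M1 c1 M2 c2 (t::real). 0 \<le> t \<and> t \<le> 1 \<longrightarrow>
      f (\<lambda>i j. t * M1 i j + (1 - t) * M2 i j) (\<lambda>i. t * c1 i + (1 - t) * c2 i)
        \<le> t * f M1 c1 + (1 - t) * f M2 c2)"

end

theory Submission
  imports Defs
begin

lemma bc_const: "block_convex (\<lambda>M c. k)"
  unfolding block_convex_def by (simp add: algebra_simps)

lemma bc_add:
  assumes "block_convex f" "block_convex g"
  shows "block_convex (\<lambda>M c. f M c + g M c)"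
  unfolding block_convex_def
proof (intro allI impI)
  fix M1 c1 M2 c2 and t :: real
  assume t: "0 \<le> t \<and> t \<le> 1"
  have "f (\<lambda>i j. t * M1 i j + (1 - t) * M2 i j) (\<lambda>i. t * c1 i + (1 - t) * c2 i)
        \<le> t * f M1 c1 + (1 - t) * f M2 c2"
       "g (\<lambda>i j. t * M1 i j + (1 - t) * M2 i j) (\<lambda>i. t * c1 i + (1 - t) * c2 i)
        \<le> t * g M1 c1 + (1 - t) * g M2 c2"
    using assms t unfolding block_convex_def by blast+
  then show "f (\<lambda>i j. t * M1 i j + (1 - t) * M2 i j) (\<lambda>i. t * c1 i + (1 - t) * c2 i) +
        g (\<lambda>i j. t * M1 i j + (1 - t) * M2 i j) (\<lambda>i. t * c1 i + (1 - t) * c2 i)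
        \<le> t * (f M1 c1 + g M1 c1) + (1 - t) * (f M2 c2 + g M2 c2)"
    by (simp add: algebra_simps)
qed

lemma bc_scale:
  assumes "block_convex f" "0 \<le> a"
  shows "block_convex (\<lambda>M c. a * f M c)"
  unfolding block_convex_def
proof (intro allI impI)
  fix M1 c1 M2 c2 and t :: real
  assume t: "0 \<le> t \<and> t \<le> 1"
  have "f (\<lambda>i j. t * M1 i j + (1 - t) * M2 i j) (\<lambda>i. t * c1 i + (1 - t) * c2 i)
        \<le> t * f M1 c1 + (1 - t) * f M2 c2"
    using assms t unfolding block_convex_def by blast
  then have "a * f (\<lambda>i j. t * M1 i j + (1 - t) * M2 i j) (\<lambda>i. t * c1 i + (1 - t) * c2 i)
        \<le> a * (t * f M1 c1 + (1 - t) * f M2 c2)"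
    using assms(2) by (rule mult_left_mono)
  then show "a * f (\<lambda>i j. t * M1 i j + (1 - t) * M2 i j) (\<lambda>i. t * c1 i + (1 - t) * c2 i)
        \<le> t * (a * f M1 c1) + (1 - t) * (a * f M2 c2)"
    by (simp add: algebra_simps)
qed

lemma bc_sum:
  assumes "\<And>j. block_convex (\<lambda>M c. f M c j)"
  shows "block_convex (\<lambda>M c. \<Sum>j<(n::nat). f M c j)"
proof (induction n)
  case 0
  then show ?case using bc_const by simp
next
  case (Suc n)
  then show ?case using bc_add[OF Suc assms[of n]] by simp
qed

lemma bc_max:
  assumes "block_convex f" "block_convex g"
  shows "block_convex (\<lambda>M c. max (f M c) (g M c))"
  unfolding block_convex_def
proof (intro allI impI)
  fix M1 c1 M2 c2 and t :: real
  assume t: "0 \<le> t \<and> t \<le> 1"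
  have 1: "f (\<lambda>i j. t * M1 i j + (1 - t) * M2 i j) (\<lambda>i. t * c1 i + (1 - t) * c2 i)
        \<le> t * f M1 c1 + (1 - t) * f M2 c2"
       and 2: "g (\<lambda>i j. t * M1 i j + (1 - t) * M2 i j) (\<lambda>i. t * c1 i + (1 - t) * c2 i)
        \<le> t * g M1 c1 + (1 - t) * g M2 c2"
    using assms t unfolding block_convex_def by blast+
  have a: "t * f M1 c1 \<le> t * max (f M1 c1) (g M1 c1)" "t * g M1 c1 \<le> t * max (f M1 c1) (g M1 c1)"
    using t by (simp_all add: mult_left_mono)
  have b: "(1-t) * f M2 c2 \<le> (1-t) * max (f M2 c2) (g M2 c2)" "(1-t) * g M2 c2 \<le> (1-t) * max (f M2 c2) (g M2 c2)"
    using t by (simp_all add: mult_left_mono)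
  show "max (f (\<lambda>i j. t * M1 i j + (1 - t) * M2 i j) (\<lambda>i. t * c1 i + (1 - t) * c2 i))
          (g (\<lambda>i j. t * M1 i j + (1 - t) * M2 i j) (\<lambda>i. t * c1 i + (1 - t) * c2 i))
        \<le> t * max (f M1 c1) (g M1 c1) + (1 - t) * max (f M2 c2) (g M2 c2)"
    using 1 2 a b by linarith
qed

lemma bc_relu:
  assumes "block_convex f"
  shows "block_convex (\<lambda>M c. relu (f M c))"
  unfolding relu_def using bc_max[OF assms bc_const] .

lemma bc_linM: "block_convex (\<lambda>M c. a * M i j)"
  unfolding block_convex_def by (simp add: algebra_simps)

lemma bc_linc: "block_convex (\<lambda>M c. c i)"
  unfolding block_convex_def by (simp add: algebra_simps)

lemma bc_relu_M: "block_convex (\<lambda>M c. relu (M i j))"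
  using bc_relu[OF bc_linM[of 1 i j]] by simp

lemma bc_relu_negM: "block_convex (\<lambda>M c. relu (- M i j))"
  using bc_relu[OF bc_linM[of "-1" i j]] by simp

lemma bc_relu_c: "block_convex (\<lambda>M c. relu (c i))"
  using bc_relu[OF bc_linc[of i]] by simp

lemma bc_relu_negc: "block_convex (\<lambda>M c. relu (- c i))"
proof -
  have "block_convex (\<lambda>M c. - c i)"
    unfolding block_convex_def by (simp add: algebra_simps)
  then show ?thesis using bc_relu by blast
qed

lemma bc_mvM:
  assumes "\<And>j. 0 \<le> v j"
  shows "block_convex (\<lambda>M c. mv n (relu_mat M) v i)"
  unfolding mv_def relu_mat_def
  using bc_sum[of "\<lambda>M c j. relu (M i j) * v j"] bc_scale[OF bc_relu_M assms]
  by (simp add: mult.commute)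

lemma bc_mvnegM:
  assumes "\<And>j. 0 \<le> v j"
  shows "block_convex (\<lambda>M c. mv n (relu_mat (neg_mat M)) v i)"
  unfolding mv_def relu_mat_def neg_mat_def
  using bc_sum[of "\<lambda>M c j. relu (- M i j) * v j"] bc_scale[OF bc_relu_negM assms]
  by (simp add: mult.commute)

lemma bc_mvW:
  assumes "\<And>j. block_convex (\<lambda>M c. f M c j)"
  shows "block_convex (\<lambda>M c. mv n (relu_mat W) (f M c) i)"
  unfolding mv_def relu_mat_def
  using bc_sum[of "\<lambda>M c j. relu (W i j) * f M c j"] bc_scale[OF assms] 
  by (simp add: relu_def)

lemma bc_affine: "block_convex (\<lambda>M c. relu (mv n M x i + c i))"
proof -
  have "block_convex (\<lambda>M c. mv n M x i)"
    unfolding mv_def using bc_sum[of "\<lambda>M c j. M i j * x j"] bc_linM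
    by (simp add: mult.commute)
  then show ?thesis using bc_relu bc_add bc_linc by blast
qed

lemma relu_nonneg: "0 \<le> relu t" by (simp add: relu_def)

lemma Zpm_SS:
  "Zpm d W b x (Suc (Suc l)) =
     ((\<lambda>i. max (mv (d (Suc l)) (relu_mat (W (Suc (Suc l)))) (fst (Zpm d W b x (Suc l))) i
                   + mv (d (Suc l)) (relu_mat (neg_mat (W (Suc (Suc l))))) (snd (Zpm d W b x (Suc l))) i + b (Suc (Suc l)) i)
               (mv (d (Suc l)) (relu_mat (W (Suc (Suc l)))) (snd (Zpm d W b x (Suc l))) i
                   + mv (d (Suc l)) (relu_mat (neg_mat (W (Suc (Suc l))))) (fst (Zpm d W b x (Suc l))) i)),
      (\<lambda>i. mv (d (Suc l)) (relu_mat (W (Suc (Suc l)))) (snd (Zpm d W b x (Suc l))) i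
                   + mv (d (Suc l)) (relu_mat (neg_mat (W (Suc (Suc l))))) (fst (Zpm d W b x (Suc l))) i))"
  by (simp add: Let_def split: prod.split)

lemma mv_nonneg: "(\<And>j. 0 \<le> v j) \<Longrightarrow> 0 \<le> mv n (relu_mat A) v i"
  unfolding mv_def relu_mat_def by (intro sum_nonneg) (simp add: relu_nonneg)

lemma Zpm_nonneg: "0 \<le> snd (Zpm d W b x (Suc k)) i \<and> snd (Zpm d W b x (Suc k)) i \<le> fst (Zpm d W b x (Suc k)) i"
proof (induction k arbitrary: i)
  case 0
  then show ?case by (simp add: relu_nonneg)
next
  case (Suc k)
  have "\<And>j. 0 \<le> snd (Zpm d W b x (Suc k)) j" "\<And>j. 0 \<le> fst (Zpm d W b x (Suc k)) j"
    using Suc by (meson order_trans)+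
  then show ?case unfolding Zpm_SS by (simp add: mv_nonneg add_nonneg_nonneg)
qed

lemma Zpm_local:
  "(\<And>j. j \<le> k \<Longrightarrow> W j = W' j \<and> b j = b' j) \<Longrightarrow> Zpm d W b x k = Zpm d W' b' x k"
proof (induction k)
  case 0 then show ?case by simp
next
  case (Suc k)
  then show ?case
  proof (cases k)
    case 0 then show ?thesis using Suc.prems[of 1] by simp
  next
    case (Suc m)
    have "Zpm d W b x k = Zpm d W' b' x k" using Suc.IH Suc.prems by simp
    then show ?thesis using Suc Suc.prems[of "Suc k"] unfolding Suc Zpm_SS by simp
  qed
qed

lemma act_Zpm: "act d W b x (Suc k) i = fst (Zpm d W b x (Suc k)) i - snd (Zpm d W b x (Suc k)) i"
proof (induction k arbitrary: i)
  case 0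
  then show ?case by simp
next
  case (Suc k)
  let ?Z = "Zpm d W b x (Suc k)" and ?n = "d (Suc k)" and ?A = "W (Suc (Suc k))"
  have "mv ?n ?A (act d W b x (Suc k)) i =
     mv ?n (relu_mat ?A) (fst ?Z) i + mv ?n (relu_mat (neg_mat ?A)) (snd ?Z) i
     - (mv ?n (relu_mat ?A) (snd ?Z) i + mv ?n (relu_mat (neg_mat ?A)) (fst ?Z) i)"
  proof -
    have "\<And>j. ?A i j * act d W b x (Suc k) j = relu (?A i j) * fst ?Z j + relu (- ?A i j) * snd ?Z j
          - (relu (?A i j) * snd ?Z j + relu (- ?A i j) * fst ?Z j)"
      unfolding Suc.IH by (simp add: relu_def max_def algebra_simps)
    then show ?thesis unfolding mv_def relu_mat_def neg_mat_def
      by (simp add: sum.distrib sum_subtractf)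
  qed
  then show ?case
    apply (simp only: act.simps Zpm_SS fst_conv snd_conv)
    by (simp add: relu_def max_def)
qed


lemma Zpm_convex:
  assumes "1 \<le> l" "l \<le> k"
  shows "block_convex (\<lambda>M c. fst (Zpm d (W(l:=M)) (b(l:=c)) x k) i)
       \<and> block_convex (\<lambda>M c. snd (Zpm d (W(l:=M)) (b(l:=c)) x k) i)"
  using assms
proof (induction k arbitrary: i)
  case 0
  then show ?case by simp
next
  case (Suc k)
  show ?case
  proof (cases "l = Suc k")
    case True
    show ?thesis
    proof (cases k)
      case 0
      then have l1: "l = 1" using True by simp
      show ?thesis unfolding l1 using bc_affine[of "d 0" x i] bc_const
        by (simp add: 0)
    next
      case (Suc m)
      define Z0 where "Z0 = Zpm d W b x (Suc m)"
      have lS: "l = Suc (Suc m)" using True Suc by simp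
      have eq: "\<And>M c. Zpm d (W(Suc (Suc m):=M)) (b(Suc (Suc m):=c)) x (Suc m) = Z0"
        unfolding Z0_def by (rule Zpm_local) auto
      have nn: "\<And>j. 0 \<le> fst Z0 j" "\<And>j. 0 \<le> snd Z0 j"
        unfolding Z0_def using Zpm_nonneg by (meson order_trans)+
      let ?n = "d (Suc m)"
      have f: "\<And>M c. fst (Zpm d (W(l:=M)) (b(l:=c)) x (Suc k)) i =
         max (mv ?n (relu_mat M) (fst Z0) i + mv ?n (relu_mat (neg_mat M)) (snd Z0) i + c i)
             (mv ?n (relu_mat M) (snd Z0) i + mv ?n (relu_mat (neg_mat M)) (fst Z0) i)"
        unfolding lS Suc Zpm_SS eq by simp
      have g: "\<And>M c. snd (Zpm d (W(l:=M)) (b(l:=c)) x (Suc k)) i =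
             (mv ?n (relu_mat M) (snd Z0) i + mv ?n (relu_mat (neg_mat M)) (fst Z0) i)"
        unfolding lS Suc Zpm_SS eq by simp
      have c2: "block_convex (\<lambda>M c. mv ?n (relu_mat M) (snd Z0) i + mv ?n (relu_mat (neg_mat M)) (fst Z0) i)"
        using bc_add bc_mvM bc_mvnegM nn by blast
      have c1: "block_convex (\<lambda>M c. mv ?n (relu_mat M) (fst Z0) i + mv ?n (relu_mat (neg_mat M)) (snd Z0) i + c i)"
        using bc_add[OF bc_add[OF bc_mvM bc_mvnegM] bc_linc] nn by blast
      show ?thesis unfolding f g using bc_max[OF c1 c2] c2 by simp
    qed
  next
    case False
    then have lk: "l \<le> k" using Suc.prems by simp
    then obtain m where km: "k = Suc m" using Suc.prems by (cases k) auto
    have ne: "l \<noteq> Suc (Suc m)" using False km by simp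
    have IH: "\<And>j. block_convex (\<lambda>M c. fst (Zpm d (W(l:=M)) (b(l:=c)) x k) j)"
             "\<And>j. block_convex (\<lambda>M c. snd (Zpm d (W(l:=M)) (b(l:=c)) x k) j)"
      using Suc.IH Suc.prems(1) lk by blast+
    let ?n = "d (Suc m)" and ?A = "W (Suc (Suc m))"
    have c2: "block_convex (\<lambda>M c. mv ?n (relu_mat ?A) (snd (Zpm d (W(l:=M)) (b(l:=c)) x k)) i
               + mv ?n (relu_mat (neg_mat ?A)) (fst (Zpm d (W(l:=M)) (b(l:=c)) x k)) i)"
      by (intro bc_add bc_mvW IH)
    have c1: "block_convex (\<lambda>M c. mv ?n (relu_mat ?A) (fst (Zpm d (W(l:=M)) (b(l:=c)) x k)) i
               + mv ?n (relu_mat (neg_mat ?A)) (snd (Zpm d (W(l:=M)) (b(l:=c)) x k)) i + b (Suc (Suc m)) i)"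
      by (intro bc_add bc_mvW bc_const IH)
    show ?thesis using bc_max[OF c1 c2] c2 ne unfolding km Zpm_SS
      by (simp del: Zpm.simps)
  qed
qed

theorem theorem3p3:
  fixes L :: nat and d :: "nat \<Rightarrow> nat" and x :: "nat \<Rightarrow> real"
  assumes "L \<ge> 2"
  shows "(\<forall>W b. \<forall>i < d L. net L d W b x i = Aterm L d W b x i - Bterm L d W b x i)
    \<and> (\<forall>W b. \<forall>l \<in> {1..L}. \<forall>i < d L.
          (\<forall>M c. 0 \<le> Aterm L d (W(l := M)) (b(l := c)) x i)
        \<and> (\<forall>M c. 0 \<le> Bterm L d (W(l := M)) (b(l := c)) x i)
        \<and> block_convex (\<lambda>M c. Aterm L d (W(l := M)) (b(l := c)) x i)
        \<and> block_convex (\<lambda>M c. Bterm L d (W(l := M)) (b(l := c)) x i))"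
proof -
  define K where "K = L - 2"
  have K: "L - 1 = Suc K" "L = Suc (Suc K)" using assms by (simp_all add: K_def)
  have AB: "\<And>W b i. Aterm L d W b x i = mv (d (L-1)) (relu_mat (W L)) (fst (Zpm d W b x (L-1))) i
        + mv (d (L-1)) (relu_mat (neg_mat (W L))) (snd (Zpm d W b x (L-1))) i + relu (b L i)"
    "\<And>W b i. Bterm L d W b x i = mv (d (L-1)) (relu_mat (W L)) (snd (Zpm d W b x (L-1))) i
        + mv (d (L-1)) (relu_mat (neg_mat (W L))) (fst (Zpm d W b x (L-1))) i + relu (- b L i)"
    unfolding Aterm_def Bterm_def by (simp_all add: Let_def split: prod.split)
  have part1: "net L d W b x i = Aterm L d W b x i - Bterm L d W b x i" for W b i
  proof -
    let ?Z = "Zpm d W b x (L-1)" and ?n = "d (L-1)" and ?A = "W L"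
    have "\<And>j. ?A i j * act d W b x (L-1) j = relu (?A i j) * fst ?Z j + relu (- ?A i j) * snd ?Z j
          - (relu (?A i j) * snd ?Z j + relu (- ?A i j) * fst ?Z j)"
      unfolding K(1) act_Zpm by (simp add: relu_def max_def algebra_simps)
    then have "mv ?n ?A (act d W b x (L-1)) i =
     mv ?n (relu_mat ?A) (fst ?Z) i + mv ?n (relu_mat (neg_mat ?A)) (snd ?Z) i
     - (mv ?n (relu_mat ?A) (snd ?Z) i + mv ?n (relu_mat (neg_mat ?A)) (fst ?Z) i)"
      unfolding mv_def relu_mat_def neg_mat_def
      by (simp add: sum.distrib sum_subtractf)
    then show ?thesis unfolding net_def AB by (simp add: relu_def max_def)
  qed
  have part2: "(\<forall>M c. 0 \<le> Aterm L d (W(l := M)) (b(l := c)) x i)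
        \<and> (\<forall>M c. 0 \<le> Bterm L d (W(l := M)) (b(l := c)) x i)
        \<and> block_convex (\<lambda>M c. Aterm L d (W(l := M)) (b(l := c)) x i)
        \<and> block_convex (\<lambda>M c. Bterm L d (W(l := M)) (b(l := c)) x i)"
    if l: "l \<in> {1..L}" for W b l i
  proof -
    have nn: "\<And>W b j. 0 \<le> fst (Zpm d W b x (L-1)) j" "\<And>W b j. 0 \<le> snd (Zpm d W b x (L-1)) j"
      unfolding K(1) using Zpm_nonneg by (meson order_trans)+
    have "0 \<le> Aterm L d W' b' x i" "0 \<le> Bterm L d W' b' x i" for W' b'
      unfolding AB using nn by (simp_all add: mv_nonneg relu_nonneg)
    moreover have "block_convex (\<lambda>M c. Aterm L d (W(l := M)) (b(l := c)) x i)
        \<and> block_convex (\<lambda>M c. Bterm L d (W(l := M)) (b(l := c)) x i)"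
    proof (cases "l = L")
      case True
      define Z0 where "Z0 = Zpm d W b x (L-1)"
      have eq: "\<And>M c. Zpm d (W(l:=M)) (b(l:=c)) x (L-1) = Z0"
        unfolding Z0_def by (rule Zpm_local) (use True K in auto)
      have nn0: "\<And>j. 0 \<le> fst Z0 j" "\<And>j. 0 \<le> snd Z0 j" unfolding Z0_def using nn by auto
      have "block_convex (\<lambda>M c. mv (d (L-1)) (relu_mat M) (fst Z0) i + mv (d (L-1)) (relu_mat (neg_mat M)) (snd Z0) i + relu (c i))
          \<and> block_convex (\<lambda>M c. mv (d (L-1)) (relu_mat M) (snd Z0) i + mv (d (L-1)) (relu_mat (neg_mat M)) (fst Z0) i + relu (- c i))"
        by (intro conjI bc_add bc_mvM bc_mvnegM bc_relu_c bc_relu_negc nn0)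
      then show ?thesis unfolding AB eq using True by simp
    next
      case False
      then have ll: "1 \<le> l" "l \<le> L - 1" using l by auto
      have IH: "\<And>j. block_convex (\<lambda>M c. fst (Zpm d (W(l:=M)) (b(l:=c)) x (L-1)) j)"
               "\<And>j. block_convex (\<lambda>M c. snd (Zpm d (W(l:=M)) (b(l:=c)) x (L-1)) j)"
        using Zpm_convex[OF ll] by blast+
      have WL: "\<And>M. (W(l:=M)) L = W L" and bL: "\<And>c. (b(l:=c)) L = b L" using False by auto
      show ?thesis unfolding AB WL bL
        by (intro conjI bc_add bc_mvW bc_const IH)
    qed
    ultimately show ?thesis by blast
  qed
  show ?thesis using part1 part2 by blast
qed

end
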